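(* For every word $w$ of length $n\ge 2$, $f(w)\ge n+2$.
   Context: A word of length $n$ is a sequence $w=w_1w_2\cdots w_n$ of letters (symbols). Let $[n]=\{1,\dots,n\}$. An $n$-grid is a function $G:[n]^2\to\Sigma$, where $\Sigma$ is an arbitrary set of letters. The $i$th row of $G$ contains $w$ if $G(i,j)=w_j$ for all $1\le j\le n$, or $G(i,j)=w_{n-j+1}$ for all $1\le j\le n$. The $j$th column contains $w$ if $G(i,j)=w_i$ for all $i$, or $G(i,j)=w_{n-i+1}$ for all $i$. The main diagonal contains $w$ if $G(i,i)=w_i$ for all $i$ or $G(i,i)=w_{n-i+1}$ for all $i$; the anti-diagonal contains $w$ if $G(i,n-i+1)=w_i$ for all $i$ or $G(i,n-i+1)=w_{n-i+1}$ for all $i$. Let $f(w,G)$ be the number of the $2n+2$ lines ($n$ rows, $n$ columns, $2$ diagonals) of $G$ that contain $w$, and $f(w)=\max_G f(w,G)$ over all $n$-grids $G$. *)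

theory Defs
  imports Main
begin

(* A word w of length n is a list; letter w_i (1-based) is w ! (i - 1).
   An n-grid is a function G :: nat => nat => 'a, only its values on [n]^2 matter. *)

definition row_contains :: "'a list \<Rightarrow> (nat \<Rightarrow> nat \<Rightarrow> 'a) \<Rightarrow> nat \<Rightarrow> bool" where
  "row_contains w G i \<longleftrightarrow> (let n = length w in
     (\<forall>j\<in>{1..n}. G i j = w ! (j - 1)) \<or> (\<forall>j\<in>{1..n}. G i j = w ! (n - j)))"

definition col_contains :: "'a list \<Rightarrow> (nat \<Rightarrow> nat \<Rightarrow> 'a) \<Rightarrow> nat \<Rightarrow> bool" where
  "col_contains w G j \<longleftrightarrow> (let n = length w in
     (\<forall>i\<in>{1..n}. G i j = w ! (i - 1)) \<or> (\<forall>i\<in>{1..n}. G i j = w ! (n - i)))"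

definition diag_contains :: "'a list \<Rightarrow> (nat \<Rightarrow> nat \<Rightarrow> 'a) \<Rightarrow> bool" where
  "diag_contains w G \<longleftrightarrow> (let n = length w in
     (\<forall>i\<in>{1..n}. G i i = w ! (i - 1)) \<or> (\<forall>i\<in>{1..n}. G i i = w ! (n - i)))"

definition antidiag_contains :: "'a list \<Rightarrow> (nat \<Rightarrow> nat \<Rightarrow> 'a) \<Rightarrow> bool" where
  "antidiag_contains w G \<longleftrightarrow> (let n = length w in
     (\<forall>i\<in>{1..n}. G i (n - i + 1) = w ! (i - 1)) \<or> (\<forall>i\<in>{1..n}. G i (n - i + 1) = w ! (n - i)))"

definition f_grid :: "'a list \<Rightarrow> (nat \<Rightarrow> nat \<Rightarrow> 'a) \<Rightarrow> nat" where
  "f_grid w G = card {i\<in>{1..length w}. row_contains w G i}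
              + card {j\<in>{1..length w}. col_contains w G j}
              + (if diag_contains w G then 1 else 0)
              + (if antidiag_contains w G then 1 else 0)"

(* f(w) = max over all n-grids (the set of values is bounded by 2n+2, so Max exists) *)
definition f_word :: "'a list \<Rightarrow> nat" where
  "f_word w = Max (range (f_grid w))"

end

theory Submission
  imports Defs
begin

lemma f_grid_le: "f_grid w G \<le> 2 * length w + 2"
proof -
  have a: "card {i\<in>{1..length w}. row_contains w G i} \<le> length w"
    by (metis (no_types, lifting) card_atLeastAtMost card_mono diff_Suc_1 finite_atLeastAtMost mem_Collect_eq subsetI)
  have b: "card {i\<in>{1..length w}. col_contains w G i} \<le> length w"
    by (metis (no_types, lifting) card_atLeastAtMost card_mono diff_Suc_1 finite_atLeastAtMost mem_Collect_eq subsetI)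
  show ?thesis using a b unfolding f_grid_def by simp
qed

theorem lemma8:
  fixes w :: "'a list"
  assumes "length w \<ge> 2"
  shows "f_word w \<ge> length w + 2"
proof -
  define G where "G = (\<lambda>(i::nat) (j::nat). w ! (j - 1))"
  have r: "{i\<in>{1..length w}. row_contains w G i} = {1..length w}"
    unfolding row_contains_def G_def Let_def by auto
  have d: "diag_contains w G" unfolding diag_contains_def G_def Let_def by auto
  have ad: "antidiag_contains w G" unfolding antidiag_contains_def G_def Let_def by auto
  have "f_grid w G \<ge> length w + 2"
    unfolding f_grid_def using r d ad by simp
  moreover have "finite (range (f_grid w))"
    by (rule finite_subset[of _ "{..2 * length w + 2}"]) (use f_grid_le in fastforce, simp)
  ultimately show ?thesis unfolding f_word_def
    by (meson Max_ge le_trans rangeI)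
qed

end
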